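(* Let $n\geq 1$. For $0\leq k\leq n-1$ let $A_{n,k}$ be the set of pairs of nonnegative integers $(i,j)$ such that $$i\geq \frac{k(k+1)}{2},\qquad j\geq \frac{(n-k-1)(n-k)}{2},\qquad i+j\leq \frac{n(n-1)}{2},$$ and let $A_n=\bigcup_{k=0}^{n-1}A_{n,k}$. Then there exists a Gog triangle of size $n$ with exactly $i$ inversions and exactly $j$ coinversions if and only if $(i,j)\in A_n$. Moreover, if $i=\frac{k(k+1)}{2}$ and $j=\frac{(n-k-1)(n-k)}{2}$ for some $k\in\{0,\dots,n-1\}$, then there is a unique Gog triangle of size $n$ with $i$ inversions and $j$ coinversions, and its bottom entry $X_{1,1}$ equals $n-k$.
   Context: A Gelfand–Tsetlin triangle of size $n$ is an array $X=(X_{i,j})_{n\geq i\geq j\geq 1}$ of positive integers (row $i$ consists of $X_{i,1},\dots,X_{i,i}$; row $n$ is the top row and row $1$, consisting of the single entry $X_{1,1}$, is the bottom) such that $X_{i+1,j}\leq X_{i,j}\leq X_{i+1,j+1}$ for all $n-1\geq i\geq j\geq 1$. A Gog triangle of size $n$ is a Gelfand–Tsetlin triangle of size $n$ whose rows are strictly increasing ($X_{i,j}<X_{i,j+1}$) and whose top row is $X_{n,j}=j$ for $1\leq j\leq n$. An inversion of a Gog triangle $X$ is a pair $(i,j)$ (with $n-1\geq i\geq j\geq 1$) such that $X_{i,j}=X_{i+1,j}$; a coinversion is a pair $(i,j)$ such that $X_{i,j}=X_{i+1,j+1}$. *)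

theory Defs
  imports Main
begin

(* A triangular array of size n is represented as X :: nat => nat => int, where
   X i j is the entry X_{i,j} for n >= i >= j >= 1. Entries outside this index
   range are normalised to 0, so that a triangle corresponds to exactly one function. *)

definition tri_idx :: "nat \<Rightarrow> (nat \<times> nat) set" where
  "tri_idx n = {(i, j). 1 \<le> j \<and> j \<le> i \<and> i \<le> n}"

definition gelfand_tsetlin :: "nat \<Rightarrow> (nat \<Rightarrow> nat \<Rightarrow> int) \<Rightarrow> bool" where
  "gelfand_tsetlin n X \<longleftrightarrow>
     (\<forall>i j. (i, j) \<notin> tri_idx n \<longrightarrow> X i j = 0) \<and>
     (\<forall>(i, j) \<in> tri_idx n. X i j > 0) \<and>
     (\<forall>i j. 1 \<le> j \<and> j \<le> i \<and> i \<le> n - 1 \<longrightarrow>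
        X (i + 1) j \<le> X i j \<and> X i j \<le> X (i + 1) (j + 1))"

definition gog :: "nat \<Rightarrow> (nat \<Rightarrow> nat \<Rightarrow> int) \<Rightarrow> bool" where
  "gog n X \<longleftrightarrow> gelfand_tsetlin n X \<and>
     (\<forall>i j. 1 \<le> j \<and> j < i \<and> i \<le> n \<longrightarrow> X i j < X i (j + 1)) \<and>
     (\<forall>j. 1 \<le> j \<and> j \<le> n \<longrightarrow> X n j = int j)"

definition inversions :: "nat \<Rightarrow> (nat \<Rightarrow> nat \<Rightarrow> int) \<Rightarrow> (nat \<times> nat) set" where
  "inversions n X = {(i, j). 1 \<le> j \<and> j \<le> i \<and> i \<le> n - 1 \<and> X i j = X (i + 1) j}"

definition coinversions :: "nat \<Rightarrow> (nat \<Rightarrow> nat \<Rightarrow> int) \<Rightarrow> (nat \<times> nat) set" where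
  "coinversions n X = {(i, j). 1 \<le> j \<and> j \<le> i \<and> i \<le> n - 1 \<and> X i j = X (i + 1) (j + 1)}"

(* A_{n,k}; note k(k+1)/2 etc. are exact integers *)
definition A_nk :: "nat \<Rightarrow> nat \<Rightarrow> (nat \<times> nat) set" where
  "A_nk n k = {(i, j). k * (k + 1) div 2 \<le> i \<and> (n - k - 1) * (n - k) div 2 \<le> j
                       \<and> i + j \<le> n * (n - 1) div 2}"

definition A_n :: "nat \<Rightarrow> (nat \<times> nat) set" where
  "A_n n = (\<Union>k \<in> {0..n-1}. A_nk n k)"

end

theory Submission
  imports Defs
begin


definition Tn :: "nat \<Rightarrow> nat" where "Tn m = m * (m + 1) div 2"

lemma Tn_0[simp]: "Tn 0 = 0" by (simp add: Tn_def)

lemma Tn_Suc: "Tn (Suc m) = Tn m + Suc m"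
proof -
  have "Suc m * (Suc m + 1) = m * (m + 1) + 2 * Suc m" by (simp add: algebra_simps)
  then show ?thesis unfolding Tn_def by simp
qed

lemma Tn_mono: "a \<le> b \<Longrightarrow> Tn a \<le> Tn b"
  unfolding Tn_def by (intro div_le_mono mult_le_mono) auto

lemma Tn_strict: "a < b \<Longrightarrow> Tn a < Tn b"
proof (induction b)
  case 0 then show ?case by simp
next
  case (Suc b)
  then show ?case using Tn_mono[of a b] by (cases "a = b") (auto simp: Tn_Suc)
qed

lemma Tn_le_iff: "Tn a \<le> Tn b \<longleftrightarrow> a \<le> b"
  using Tn_mono Tn_strict by (meson leD leI)

lemma Tn_add: "Tn a + Tn b \<le> Tn (a + b)"
proof (induction b)
  case 0 then show ?case by simp
next
  case (Suc b) then show ?case by (simp add: Tn_Suc)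
qed

lemma sum_rev_Tn: "(\<Sum>j<k. k - j) = Tn k"
proof (induction k)
  case 0 then show ?case by simp
next
  case (Suc k)
  have "(\<Sum>j<Suc k. Suc k - j) = Suc k + (\<Sum>j<k. k - j)"
    by (subst sum.lessThan_Suc_shift) simp
  then show ?case using Suc by (simp add: Tn_Suc)
qed

lemma sum_trunc_Tn: "k \<le> M \<Longrightarrow> (\<Sum>j<M. k - j) = Tn k"
proof (induction M)
  case 0 then show ?case by simp
next
  case (Suc M)
  show ?case
  proof (cases "k \<le> M")
    case True then show ?thesis using Suc by simp
  next
    case False then have "k = Suc M" using Suc by simp
    then show ?thesis using sum_rev_Tn[of "Suc M"] by (simp del: sum.lessThan_Suc)
  qed
qed

lemma sum_eq_pointwise:
  fixes f g :: "nat \<Rightarrow> nat"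
  assumes "finite S" "\<And>x. x \<in> S \<Longrightarrow> f x \<le> g x" "sum f S = sum g S" "x \<in> S"
  shows "f x = g x"
proof (rule ccontr)
  assume "f x \<noteq> g x"
  then have "f x < g x" using assms(2,4) by force
  then have "sum f S < sum g S" using assms by (intro sum_strict_mono_ex1) auto
  then show False using assms(3) by simp
qed

lemma comb_core:
  fixes A B :: "nat \<Rightarrow> nat" and M :: nat
  assumes H: "\<And>j d. j + d < M \<Longrightarrow> M - j - d \<le> A j + B d"
  defines "P \<equiv> \<lambda>k. k \<le> M \<and> (\<forall>j<k. k - j \<le> A j)"
  defines "K \<equiv> Greatest P"
  shows "K \<le> M" "\<And>j. j < M \<Longrightarrow> K - j \<le> A j" "Tn K \<le> (\<Sum>j<M. A j)"
    "K < M \<Longrightarrow> d < M \<Longrightarrow> M - K - d \<le> B d"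
    "K < M \<Longrightarrow> Tn (M - K) \<le> (\<Sum>d<M. B d)"
proof -
  have P0: "P 0" unfolding P_def by simp
  have bnd: "\<And>y. P y \<Longrightarrow> y \<le> M" unfolding P_def by simp
  have PK: "P K" unfolding K_def using GreatestI_nat[of P 0 M, OF P0 bnd] .
  have maxK: "\<And>y. P y \<Longrightarrow> y \<le> K" unfolding K_def using Greatest_le_nat[of P _ M, OF _ bnd] by blast
  show KM: "K \<le> M" using PK unfolding P_def by simp
  show AK: "\<And>j. j < M \<Longrightarrow> K - j \<le> A j"
  proof -
    fix j assume "j < M"
    show "K - j \<le> A j"
    proof (cases "j < K")
      case True then show ?thesis using PK unfolding P_def by simp
    next
      case False then show ?thesis by simp
    qed
  qed
  have "(\<Sum>j<M. K - j) \<le> (\<Sum>j<M. A j)" by (intro sum_mono) (use AK in auto)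
  then show "Tn K \<le> (\<Sum>j<M. A j)" using sum_trunc_Tn[OF KM] by simp
  have BK: "K < M \<Longrightarrow> d < M \<Longrightarrow> M - K - d \<le> B d" for d
  proof -
    assume KM': "K < M" and dM: "d < M"
    have "\<not> P (Suc K)" using maxK by fastforce
    then obtain j0 where j0: "j0 < Suc K" "A j0 < Suc K - j0" using KM' unfolding P_def by auto
    show "M - K - d \<le> B d"
    proof (cases "d < M - K")
      case True
      then have "j0 + d < M" using j0 by simp
      from H[OF this] j0 show ?thesis by simp
    next
      case False then show ?thesis by simp
    qed
  qed
  show "K < M \<Longrightarrow> d < M \<Longrightarrow> M - K - d \<le> B d" for d using BK by blast
  assume KM': "K < M"
  have "(\<Sum>d<M. M - K - d) \<le> (\<Sum>d<M. B d)" by (intro sum_mono) (use BK KM' in auto)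
  then show "Tn (M - K) \<le> (\<Sum>d<M. B d)" using sum_trunc_Tn[of "M - K" M] by simp
qed

lemma comb:
  fixes A B :: "nat \<Rightarrow> nat" and M :: nat
  assumes H: "\<And>j d. j + d < M \<Longrightarrow> M - j - d \<le> A j + B d"
  shows "\<exists>k\<le>M. Tn k \<le> (\<Sum>j<M. A j) \<and> Tn (M - k) \<le> (\<Sum>d<M. B d)"
proof -
  note c = comb_core[OF H]
  define K where "K = Greatest (\<lambda>k. k \<le> M \<and> (\<forall>j<k. k - j \<le> A j))"
  show ?thesis
  proof (cases "K < M")
    case True then show ?thesis using c unfolding K_def by blast
  next
    case False
    then have "K = M" using c(1) unfolding K_def by simp
    then show ?thesis using c(3) unfolding K_def by (intro exI[of _ M]) auto
  qed
qed

lemma comb_eq: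
  fixes A B :: "nat \<Rightarrow> nat" and M :: nat
  assumes H: "\<And>j d. j + d < M \<Longrightarrow> M - j - d \<le> A j + B d"
    and kM: "k \<le> M" and SA: "(\<Sum>j<M. A j) = Tn k" and SB: "(\<Sum>d<M. B d) = Tn (M - k)"
  shows "\<And>j. j < M \<Longrightarrow> A j = k - j" "\<And>d. d < M \<Longrightarrow> B d = M - k - d"
proof -
  note c = comb_core[OF H]
  define K where "K = Greatest (\<lambda>k. k \<le> M \<and> (\<forall>j<k. k - j \<le> A j))"
  have c1: "K \<le> M" "\<And>j. j < M \<Longrightarrow> K - j \<le> A j" "Tn K \<le> (\<Sum>j<M. A j)"
    "\<And>d. K < M \<Longrightarrow> d < M \<Longrightarrow> M - K - d \<le> B d"
    "K < M \<Longrightarrow> Tn (M - K) \<le> (\<Sum>d<M. B d)" using c unfolding K_def by auto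
  have "K \<le> k" using c1(3) SA Tn_le_iff by simp
  moreover have "k \<le> K"
  proof (cases "K < M")
    case True
    then have "M - K \<le> M - k" using c1(5) SB Tn_le_iff by simp
    then show ?thesis using True kM by simp
  next
    case False then show ?thesis using c1(1) kM by simp
  qed
  ultimately have kK: "k = K" by simp
  show "A j = k - j" if "j < M" for j
  proof -
    have "sum (\<lambda>j. k - j) {..<M} = sum A {..<M}" using SA sum_trunc_Tn[OF kM] by simp
    from sum_eq_pointwise[of "{..<M}" "\<lambda>j. k - j" A, OF _ _ this] show ?thesis
      using c1(2) kK that by auto
  qed
  show "B d = M - k - d" if "d < M" for d
  proof (cases "k < M")
    case True
    have "sum (\<lambda>d. M - k - d) {..<M} = sum B {..<M}" using SB sum_trunc_Tn[of "M - k" M] by simp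
    from sum_eq_pointwise[of "{..<M}" "\<lambda>d. M - k - d" B, OF _ _ this] show ?thesis
      using c1(4) kK that True by auto
  next
    case False
    then have "k = M" using kM by simp
    then have "sum B {..<M} = 0" using SB by simp
    then show ?thesis using that \<open>k = M\<close> by simp
  qed
qed



lemma gog_zero: "gog n X \<Longrightarrow> (i, j) \<notin> tri_idx n \<Longrightarrow> X i j = 0"
  unfolding gog_def gelfand_tsetlin_def by blast

lemma gog_pos: "gog n X \<Longrightarrow> 1 \<le> j \<Longrightarrow> j \<le> i \<Longrightarrow> i \<le> n \<Longrightarrow> X i j > 0"
  unfolding gog_def gelfand_tsetlin_def tri_idx_def by blast

lemma gog_gt1: "gog n X \<Longrightarrow> 1 \<le> j \<Longrightarrow> j \<le> i \<Longrightarrow> i \<le> n - 1 \<Longrightarrow> X (i + 1) j \<le> X i j"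
  unfolding gog_def gelfand_tsetlin_def by blast

lemma gog_gt2: "gog n X \<Longrightarrow> 1 \<le> j \<Longrightarrow> j \<le> i \<Longrightarrow> i \<le> n - 1 \<Longrightarrow> X i j \<le> X (i + 1) (j + 1)"
  unfolding gog_def gelfand_tsetlin_def by blast

lemma gog_strict: "gog n X \<Longrightarrow> 1 \<le> j \<Longrightarrow> j < i \<Longrightarrow> i \<le> n \<Longrightarrow> X i j < X i (j + 1)"
  unfolding gog_def by blast

lemma gog_top: "gog n X \<Longrightarrow> 1 \<le> j \<Longrightarrow> j \<le> n \<Longrightarrow> X n j = int j"
  unfolding gog_def by blast

lemma gog_bounds_aux:
  assumes g: "gog n X"
  shows "\<forall>i j. n - i = m \<longrightarrow> 1 \<le> j \<longrightarrow> j \<le> i \<longrightarrow> i \<le> n \<longrightarrow> int j \<le> X i j \<and> X i j \<le> int (n - i + j)"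
proof (induction m)
  case 0
  then show ?case using gog_top[OF g] by auto
next
  case (Suc m)
  show ?case
  proof (intro allI impI)
    fix i j assume a: "n - i = Suc m" "1 \<le> j" "j \<le> i" "i \<le> n"
    then have "i \<le> n - 1" by simp
    have nm: "n - (i + 1) = m" using a by simp
    have i1: "int j \<le> X (i + 1) j" "X (i + 1) (j + 1) \<le> int (n - (i + 1) + (j + 1))"
      using Suc.IH[rule_format, OF nm, of j] Suc.IH[rule_format, OF nm, of "j+1"] a by auto
    have "X (i + 1) j \<le> X i j" "X i j \<le> X (i + 1) (j + 1)"
      using gog_gt1[OF g] gog_gt2[OF g] a \<open>i \<le> n - 1\<close> by auto
    moreover have "n - (i + 1) + (j + 1) = n - i + j" using a by simp
    ultimately show "int j \<le> X i j \<and> X i j \<le> int (n - i + j)" using i1 by simp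
  qed
qed

lemma gog_bounds:
  assumes "gog n X" "1 \<le> j" "j \<le> i" "i \<le> n"
  shows "int j \<le> X i j" "X i j \<le> int (n - i + j)"
  using gog_bounds_aux[OF assms(1), of "n - i"] assms by auto

definition colset :: "nat \<Rightarrow> (nat \<Rightarrow> nat \<Rightarrow> int) \<Rightarrow> nat \<Rightarrow> nat \<Rightarrow> nat set" where
  "colset n X j i = {i'. i \<le> i' \<and> i' \<le> n - 1 \<and> X i' j = X (i' + 1) j}"

definition dset :: "nat \<Rightarrow> (nat \<Rightarrow> nat \<Rightarrow> int) \<Rightarrow> nat \<Rightarrow> nat \<Rightarrow> nat set" where
  "dset n X d i = {i'. i \<le> i' \<and> i' \<le> n - 1 \<and> X i' (i' - d) = X (i' + 1) (i' - d + 1)}"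

lemma colset_finite[simp]: "finite (colset n X j i)"
  by (rule finite_subset[of _ "{..n}"]) (auto simp: colset_def)

lemma dset_finite[simp]: "finite (dset n X d i)"
  by (rule finite_subset[of _ "{..n}"]) (auto simp: dset_def)

lemma colset_step: "i \<le> n - 1 \<Longrightarrow> colset n X j i =
   (if X i j = X (i + 1) j then insert i (colset n X j (i + 1)) else colset n X j (i + 1))"
  unfolding colset_def by (rule set_eqI) (case_tac "x = i", auto)

lemma dset_step: "i \<le> n - 1 \<Longrightarrow> dset n X d i =
   (if X i (i - d) = X (i + 1) (i - d + 1) then insert i (dset n X d (i + 1)) else dset n X d (i + 1))"
  unfolding dset_def by (rule set_eqI) (case_tac "x = i", auto)

lemma colset_top: "1 \<le> n \<Longrightarrow> colset n X j n = {}"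
  unfolding colset_def by auto

lemma dset_top: "1 \<le> n \<Longrightarrow> dset n X d n = {}"
  unfolding dset_def by auto

lemma col_lemma_aux:
  assumes g: "gog n X" and j: "1 \<le> j"
  shows "\<forall>i. n - i = m \<longrightarrow> j \<le> i \<longrightarrow> i \<le> n \<longrightarrow>
      int (n - i) \<le> int (card (colset n X j i)) + X i j - int j"
proof (induction m)
  case 0
  show ?case
  proof (intro allI impI)
    fix i assume a: "n - i = 0" "j \<le> i" "i \<le> n"
    then have "i = n" by simp
    then show "int (n - i) \<le> int (card (colset n X j i)) + X i j - int j"
      using gog_top[OF g j] a j colset_top[of n X j] by simp
  qed
next
  case (Suc m)
  show ?case
  proof (intro allI impI)
    fix i assume a: "n - i = Suc m" "j \<le> i" "i \<le> n"
    then have il: "i \<le> n - 1" by simp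
    have nm: "n - (i + 1) = m" using a by simp
    have IH: "int (n - (i + 1)) \<le> int (card (colset n X j (i + 1))) + X (i + 1) j - int j"
      using Suc.IH[rule_format, OF nm] a by auto
    have ge: "X (i + 1) j \<le> X i j" using gog_gt1[OF g j] a il by auto
    have ni: "i \<notin> colset n X j (i + 1)" by (simp add: colset_def)
    have nn: "int (n - i) = int (n - (i + 1)) + 1" using a by simp
    show "int (n - i) \<le> int (card (colset n X j i)) + X i j - int j"
    proof (cases "X i j = X (i + 1) j")
      case True
      then have "card (colset n X j i) = card (colset n X j (i + 1)) + 1"
        using colset_step[OF il, of X j] ni by simp
      then show ?thesis using IH True nn by simp
    next
      case False
      then have "card (colset n X j i) = card (colset n X j (i + 1))"
        using colset_step[OF il, of X j] by simp
      then show ?thesis using IH False ge nn by simp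
    qed
  qed
qed

lemma col_lemma:
  assumes "gog n X" "1 \<le> j" "j \<le> i" "i \<le> n"
  shows "int (n - i) \<le> int (card (colset n X j i)) + X i j - int j"
  using col_lemma_aux[OF assms(1,2), of "n - i"] assms by auto

lemma diag_lemma_aux:
  assumes g: "gog n X"
  shows "\<forall>i. n - i = m \<longrightarrow> d + 1 \<le> i \<longrightarrow> i \<le> n \<longrightarrow>
      X i (i - d) - int (i - d) \<le> int (card (dset n X d i))"
proof (induction m)
  case 0
  show ?case
  proof (intro allI impI)
    fix i assume a: "n - i = 0" "d + 1 \<le> i" "i \<le> n"
    then have "i = n" by simp
    then show "X i (i - d) - int (i - d) \<le> int (card (dset n X d i))"
      using gog_top[OF g, of "n - d"] a by simp
  qed
next
  case (Suc m)
  show ?case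
  proof (intro allI impI)
    fix i assume a: "n - i = Suc m" "d + 1 \<le> i" "i \<le> n"
    then have il: "i \<le> n - 1" by simp
    have e: "i + 1 - d = i - d + 1" using a by simp
    have nm: "n - (i + 1) = m" using a by simp
    have IH0: "X (i + 1) (i + 1 - d) - int (i + 1 - d) \<le> int (card (dset n X d (i + 1)))"
      using Suc.IH[rule_format, OF nm] a by auto
    have IH: "X (i + 1) (i - d + 1) - int (i - d + 1) \<le> int (card (dset n X d (i + 1)))"
      using IH0 unfolding e .
    have le: "X i (i - d) \<le> X (i + 1) (i - d + 1)" using gog_gt2[OF g, of "i - d" i] a il by auto
    have ni: "i \<notin> dset n X d (i + 1)" by (simp add: dset_def)
    show "X i (i - d) - int (i - d) \<le> int (card (dset n X d i))"
    proof (cases "X i (i - d) = X (i + 1) (i - d + 1)")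
      case True
      then have "card (dset n X d i) = card (dset n X d (i + 1)) + 1"
        using dset_step[OF il, of X d] ni by simp
      then show ?thesis using IH True by simp
    next
      case False
      then have "card (dset n X d i) = card (dset n X d (i + 1))"
        using dset_step[OF il, of X d] by simp
      then show ?thesis using IH False le by simp
    qed
  qed
qed

lemma diag_lemma:
  assumes "gog n X" "d + 1 \<le> i" "i \<le> n"
  shows "X i (i - d) - int (i - d) \<le> int (card (dset n X d i))"
  using diag_lemma_aux[OF assms(1), of "n - i" d] assms by auto

lemma colset_mono: "i0 \<le> i \<Longrightarrow> colset n X j i \<subseteq> colset n X j i0"
  unfolding colset_def by auto

lemma dset_mono: "i0 \<le> i \<Longrightarrow> dset n X d i \<subseteq> dset n X d i0"
  unfolding dset_def by auto

lemma inv_decomp: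
  "inversions n X = (\<lambda>(j, i). (i, j + 1)) ` (SIGMA j:{..<n - 1}. colset n X (j + 1) (j + 1))"
  unfolding inversions_def colset_def
  apply (auto simp: image_iff)
  apply (rule_tac x="b - 1" in bexI)
   apply auto
  done

lemma card_inv_sum:
  "card (inversions n X) = (\<Sum>j<n - 1. card (colset n X (j + 1) (j + 1)))"
proof -
  have "inj_on (\<lambda>(j, i). (i, j + 1)) (SIGMA j:{..<n - 1}. colset n X (j + 1) (j + 1))"
    by (auto simp: inj_on_def)
  then show ?thesis unfolding inv_decomp
    by (simp add: card_image card_SigmaI)
qed

lemma coinv_decomp:
  "coinversions n X = (\<lambda>(d, i). (i, i - d)) ` (SIGMA d:{..<n - 1}. dset n X d (d + 1))"
  unfolding coinversions_def dset_def
  apply (auto simp: image_iff)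
  apply (rule_tac x="a - b" in bexI)
   apply auto
  done

lemma card_coinv_sum:
  "card (coinversions n X) = (\<Sum>d<n - 1. card (dset n X d (d + 1)))"
proof -
  have "inj_on (\<lambda>(d, i). (i, i - d)) (SIGMA d:{..<n - 1}. dset n X d (d + 1))"
    by (auto simp: inj_on_def dset_def)
  then show ?thesis unfolding coinv_decomp
    by (simp add: card_image card_SigmaI)
qed

lemma key_ineq:
  assumes g: "gog n X" and jd: "j + d < n - 1"
  shows "n - 1 - j - d \<le> card (colset n X (j + 1) (j + 1)) + card (dset n X d (d + 1))"
proof -
  define i where "i = j + 1 + d"
  have c: "int (n - i) \<le> int (card (colset n X (j + 1) i)) + X i (j + 1) - int (j + 1)"
    using col_lemma[OF g, of "j + 1" i] jd unfolding i_def by simp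
  have id: "i - d = j + 1" unfolding i_def by simp
  have dd: "X i (j + 1) - int (j + 1) \<le> int (card (dset n X d i))"
    using diag_lemma[OF g, of d i] jd id unfolding i_def by simp
  have m1: "card (colset n X (j + 1) i) \<le> card (colset n X (j + 1) (j + 1))"
    by (rule card_mono) (auto simp: i_def colset_def)
  have m2: "card (dset n X d i) \<le> card (dset n X d (d + 1))"
    by (rule card_mono) (auto simp: i_def dset_def)
  have "n - i = n - 1 - j - d" unfolding i_def by simp
  then show ?thesis using c dd m1 m2 by linarith
qed

lemma necessity_T:
  assumes g: "gog n X"
  shows "\<exists>k\<le>n - 1. Tn k \<le> card (inversions n X) \<and> Tn (n - 1 - k) \<le> card (coinversions n X)"
  using comb[of "n - 1" "\<lambda>j. card (colset n X (j + 1) (j + 1))" "\<lambda>d. card (dset n X d (d + 1))"]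
    key_ineq[OF g] card_inv_sum[of n X] card_coinv_sum[of n X] by auto



lemma arith_F:
  fixes x :: int
  assumes "1 \<le> j" "j \<le> i" "i \<le> n - 1" "k \<le> n - 1"
    "int (n - i) \<le> int c1 + x - int j" "c1 \<le> k - (j - 1)"
    "x - int j \<le> int c2" "c2 \<le> n - 1 - k - (i - j)"
    "int j \<le> x" "x \<le> int (n - i + j)"
  shows "x = int j + int (min (n - i) (n - 1 - k - (i - j)))"
proof (cases "k + 1 \<le> j")
  case True
  then have "c1 = 0" using assms by simp
  then have "min (n - i) (n - 1 - k - (i - j)) = n - i" using assms True by simp
  then show ?thesis using assms \<open>c1 = 0\<close> by simp
next
  case False
  then have m: "min (n - i) (n - 1 - k - (i - j)) = n - 1 - k - (i - j)" using assms by simp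
  show ?thesis
  proof (cases "n - 1 - k \<le> i - j")
    case True
    then show ?thesis using assms m by simp
  next
    case False
    then have "int (n - 1 - k - (i - j)) = int n - 1 - int k - int i + int j" using assms by simp
    moreover have "int (k - (j - 1)) = int k + 1 - int j" using assms \<open>\<not> k + 1 \<le> j\<close> by simp
    moreover have "int (n - i) = int n - int i" using assms by simp
    ultimately show ?thesis using assms m by simp
  qed
qed

definition Fk :: "nat \<Rightarrow> nat \<Rightarrow> nat \<Rightarrow> nat \<Rightarrow> int" where
  "Fk n k i j = (if (i, j) \<in> tri_idx n then int j + int (min (n - i) (n - 1 - k - (i - j))) else 0)"

lemma uniqueness:
  assumes g: "gog n X" and n1: "1 \<le> n" and kn: "k \<le> n - 1"
    and ci: "card (inversions n X) = Tn k" and cc: "card (coinversions n X) = Tn (n - 1 - k)"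
  shows "X = Fk n k"
proof (intro ext)
  fix i j
  define A where "A = (\<lambda>j. card (colset n X (j + 1) (j + 1)))"
  define B where "B = (\<lambda>d. card (dset n X d (d + 1)))"
  have H: "\<And>j d. j + d < n - 1 \<Longrightarrow> n - 1 - j - d \<le> A j + B d"
    using key_ineq[OF g] unfolding A_def B_def by blast
  have SA: "(\<Sum>j<n - 1. A j) = Tn k" using ci card_inv_sum[of n X] unfolding A_def by simp
  have SB: "(\<Sum>d<n - 1. B d) = Tn (n - 1 - k)" using cc card_coinv_sum[of n X] unfolding B_def by simp
  have EA: "\<And>j. j < n - 1 \<Longrightarrow> A j = k - j"
    using comb_eq(1)[of "n - 1" A B k] H kn SA SB by blast
  have EB: "\<And>d. d < n - 1 \<Longrightarrow> B d = n - 1 - k - d"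
    using comb_eq(2)[of "n - 1" A B k] H kn SA SB by blast
  show "X i j = Fk n k i j"
  proof (cases "(i, j) \<in> tri_idx n")
    case False
    then show ?thesis using gog_zero[OF g] unfolding Fk_def by simp
  next
    case True
    then have t: "1 \<le> j" "j \<le> i" "i \<le> n" unfolding tri_idx_def by auto
    show ?thesis
    proof (cases "i = n")
      case True
      then show ?thesis using gog_top[OF g] t unfolding Fk_def tri_idx_def by simp
    next
      case False
      then have il: "i \<le> n - 1" using t by simp
      have c1: "int (n - i) \<le> int (card (colset n X j i)) + X i j - int j"
        using col_lemma[OF g t] .
      have j1: "j - 1 < n - 1" using t il by simp
      have "card (colset n X j i) \<le> A (j - 1)"
        unfolding A_def using t by (intro card_mono) (auto simp: colset_def)
      also have "\<dots> = k - (j - 1)" using EA[OF j1] .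
      finally have c1': "card (colset n X j i) \<le> k - (j - 1)" .
      have d1: "X i (i - (i - j)) - int (i - (i - j)) \<le> int (card (dset n X (i - j) i))"
        using diag_lemma[OF g, of "i - j" i] t by simp
      have ij: "i - (i - j) = j" using t by simp
      have dl: "i - j < n - 1" using t il by simp
      have "card (dset n X (i - j) i) \<le> B (i - j)"
        unfolding B_def using t by (intro card_mono) (auto simp: dset_def)
      also have "\<dots> = n - 1 - k - (i - j)" using EB[OF dl] .
      finally have d1': "card (dset n X (i - j) i) \<le> n - 1 - k - (i - j)" .
      have b: "int j \<le> X i j" "X i j \<le> int (n - i + j)" using gog_bounds[OF g t] by auto
      show ?thesis using arith_F[OF t(1,2) il kn c1 c1' _ d1' b] d1 ij True unfolding Fk_def by simp
    qed
  qed
qed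



definition addL :: "nat \<Rightarrow> (nat \<Rightarrow> nat \<Rightarrow> int) \<Rightarrow> nat \<Rightarrow> nat \<Rightarrow> int" where
  "addL n Y i j = (if (i, j) \<in> tri_idx n then (if j = 1 then 1 else Y (i - 1) (j - 1) + 1) else 0)"

lemma gog_intro:
  assumes "\<And>i j. (i, j) \<notin> tri_idx n \<Longrightarrow> X i j = 0"
    "\<And>i j. 1 \<le> j \<Longrightarrow> j \<le> i \<Longrightarrow> i \<le> n \<Longrightarrow> 0 < X i j"
    "\<And>i j. 1 \<le> j \<Longrightarrow> j \<le> i \<Longrightarrow> i \<le> n - 1 \<Longrightarrow> X (i + 1) j \<le> X i j"
    "\<And>i j. 1 \<le> j \<Longrightarrow> j \<le> i \<Longrightarrow> i \<le> n - 1 \<Longrightarrow> X i j \<le> X (i + 1) (j + 1)"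
    "\<And>i j. 1 \<le> j \<Longrightarrow> j < i \<Longrightarrow> i \<le> n \<Longrightarrow> X i j < X i (j + 1)"
    "\<And>j. 1 \<le> j \<Longrightarrow> j \<le> n \<Longrightarrow> X n j = int j"
  shows "gog n X"
  unfolding gog_def gelfand_tsetlin_def tri_idx_def using assms
  by (auto simp: tri_idx_def)

lemma addL_gog:
  assumes g: "gog m Y" and m1: "1 \<le> m"
  shows "gog (Suc m) (addL (Suc m) Y)"
proof (rule gog_intro)
  let ?X = "addL (Suc m) Y"
  show "?X i j = 0" if "(i, j) \<notin> tri_idx (Suc m)" for i j using that by (simp add: addL_def)
  show "0 < ?X i j" if t: "1 \<le> j" "j \<le> i" "i \<le> Suc m" for i j
  proof (cases "j = 1")
    case True then show ?thesis using t by (simp add: addL_def tri_idx_def)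
  next
    case False
    then have "0 < Y (i - 1) (j - 1)" using gog_pos[OF g, of "j - 1" "i - 1"] t by simp
    then show ?thesis using t False by (simp add: addL_def tri_idx_def)
  qed
  show "?X (i + 1) j \<le> ?X i j" if t0: "1 \<le> j" "j \<le> i" "i \<le> Suc m - 1" for i j
  proof -
    have t: "1 \<le> j" "j \<le> i" "i \<le> m" using t0 by auto
    show ?thesis
    proof (cases "j = 1")
      case True then show ?thesis using t by (simp add: addL_def tri_idx_def)
    next
      case False
      then have "Y (i - 1 + 1) (j - 1) \<le> Y (i - 1) (j - 1)" using gog_gt1[OF g, of "j - 1" "i - 1"] t by simp
      then show ?thesis using t False by (simp add: addL_def tri_idx_def)
    qed
  qed
  show "?X i j \<le> ?X (i + 1) (j + 1)" if t0: "1 \<le> j" "j \<le> i" "i \<le> Suc m - 1" for i j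
  proof -
    have t: "1 \<le> j" "j \<le> i" "i \<le> m" using t0 by auto
    have x1: "?X (i + 1) (j + 1) = Y i j + 1" using t by (simp add: addL_def tri_idx_def)
    show ?thesis
    proof (cases "j = 1")
      case True
      have "0 < Y i 1" using gog_pos[OF g, of 1 i] t by simp
      then show ?thesis using True x1 t by (simp add: addL_def tri_idx_def)
    next
      case False
      then have "Y (i - 1) (j - 1) \<le> Y (i - 1 + 1) (j - 1 + 1)" using gog_gt2[OF g, of "j - 1" "i - 1"] t by simp
      then show ?thesis using t False x1 by (simp add: addL_def tri_idx_def)
    qed
  qed
  show "?X i j < ?X i (j + 1)" if t: "1 \<le> j" "j < i" "i \<le> Suc m" for i j
  proof (cases "j = 1")
    case True
    have "0 < Y (i - 1) 1" using gog_pos[OF g, of 1 "i - 1"] t by simp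
    then show ?thesis using True t by (simp add: addL_def tri_idx_def)
  next
    case False
    then have "Y (i - 1) (j - 1) < Y (i - 1) (j - 1 + 1)" using gog_strict[OF g, of "j - 1" "i - 1"] t by simp
    then show ?thesis using t False by (simp add: addL_def tri_idx_def)
  qed
  show "?X (Suc m) j = int j" if a: "1 \<le> j" "j \<le> Suc m" for j
  proof (cases "j = 1")
    case True then show ?thesis by (simp add: addL_def tri_idx_def)
  next
    case False
    then have "Y m (j - 1) = int (j - 1)" using gog_top[OF g, of "j - 1"] a by simp
    then show ?thesis using a False by (simp add: addL_def tri_idx_def)
  qed
qed

lemma addL_inv:
  assumes m1: "1 \<le> m"
  shows "inversions (Suc m) (addL (Suc m) Y) =
    {(i, 1) | i. 1 \<le> i \<and> i \<le> m} \<union> (\<lambda>(i, j). (Suc i, Suc j)) ` inversions m Y"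
proof (rule set_eqI)
  fix p :: "nat \<times> nat"
  obtain i j where p: "p = (i, j)" by fastforce
  show "p \<in> inversions (Suc m) (addL (Suc m) Y) \<longleftrightarrow>
    p \<in> {(i, 1) | i. 1 \<le> i \<and> i \<le> m} \<union> (\<lambda>(i, j). (Suc i, Suc j)) ` inversions m Y"
  proof (cases "j \<le> 1")
    case True
    then show ?thesis unfolding p
      by (auto simp: inversions_def addL_def tri_idx_def)
  next
    case False
    then obtain i' j' where ij: "i = Suc i'" "j = Suc j'" "1 \<le> j'" if "j \<le> i"
      by (metis Suc_le_D Suc_le_eq not_le order_trans)
    show ?thesis
    proof (cases "j \<le> i")
      case True
      note q = ij[OF True]
      show ?thesis unfolding p q
        by (auto simp: inversions_def addL_def tri_idx_def q(3))
    next
      case False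
      then show ?thesis unfolding p by (auto simp: inversions_def)
    qed
  qed
qed

lemma addL_coinv:
  assumes g: "gog m Y" and m1: "1 \<le> m"
  shows "coinversions (Suc m) (addL (Suc m) Y) = (\<lambda>(i, j). (Suc i, Suc j)) ` coinversions m Y"
proof (rule set_eqI)
  fix p :: "nat \<times> nat"
  obtain i j where p: "p = (i, j)" by fastforce
  show "p \<in> coinversions (Suc m) (addL (Suc m) Y) \<longleftrightarrow> p \<in> (\<lambda>(i, j). (Suc i, Suc j)) ` coinversions m Y"
  proof (cases "j \<le> 1")
    case True
    then show ?thesis unfolding p
      using gog_pos[OF g, of j i]
      by (auto simp: coinversions_def addL_def tri_idx_def)
  next
    case False
    then obtain i' j' where ij: "i = Suc i'" "j = Suc j'" "1 \<le> j'" if "j \<le> i"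
      by (metis Suc_le_D Suc_le_eq not_le order_trans)
    show ?thesis
    proof (cases "j \<le> i")
      case True
      note q = ij[OF True]
      show ?thesis unfolding p q using q(3)
        by (auto simp: coinversions_def addL_def tri_idx_def)
    next
      case False
      then show ?thesis unfolding p by (auto simp: coinversions_def)
    qed
  qed
qed

lemma inv_finite[simp]: "finite (inversions n X)"
  by (rule finite_subset[of _ "{..n} \<times> {..n}"]) (auto simp: inversions_def)

lemma coinv_finite[simp]: "finite (coinversions n X)"
  by (rule finite_subset[of _ "{..n} \<times> {..n}"]) (auto simp: coinversions_def)

lemma addL_cards:
  assumes g: "gog m Y" and "1 \<le> m"
  shows "card (inversions (Suc m) (addL (Suc m) Y)) = m + card (inversions m Y)"
    "card (coinversions (Suc m) (addL (Suc m) Y)) = card (coinversions m Y)"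
proof -
  have inj: "inj (\<lambda>(i, j). (Suc i, Suc j) :: nat \<times> nat)" by (auto simp: inj_def)
  have c1: "card {(i, 1::nat) | i. 1 \<le> i \<and> i \<le> m} = m"
  proof -
    have e: "{(i, 1::nat) | i. 1 \<le> i \<and> i \<le> m} = (\<lambda>i. (i, 1::nat)) ` {1..m}" by auto
    show ?thesis unfolding e by (simp add: card_image inj_on_def)
  qed
  have d: "{(i, 1) | i. 1 \<le> i \<and> i \<le> m} \<inter> (\<lambda>(i, j). (Suc i, Suc j)) ` inversions m Y = {}"
    by (auto simp: inversions_def)
  show "card (inversions (Suc m) (addL (Suc m) Y)) = m + card (inversions m Y)"
    unfolding addL_inv[OF assms(2)]
    by (subst card_Un_disjoint) (use d c1 inj in \<open>auto simp: card_image inj_on_subset\<close>)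
  show "card (coinversions (Suc m) (addL (Suc m) Y)) = card (coinversions m Y)"
    unfolding addL_coinv[OF assms] using inj by (simp add: card_image inj_on_subset)
qed



definition addR :: "nat \<Rightarrow> (nat \<Rightarrow> nat \<Rightarrow> int) \<Rightarrow> nat \<Rightarrow> nat \<Rightarrow> int" where
  "addR n Y i j = (if (i, j) \<in> tri_idx n then (if j = i then int n else Y (i - 1) j) else 0)"

lemma gog_diag_le: "gog m Y \<Longrightarrow> 1 \<le> j \<Longrightarrow> j \<le> i \<Longrightarrow> i \<le> m \<Longrightarrow> Y i j \<le> int m"
  using gog_bounds(2)[of m Y j i] by simp

lemma gog_lt_last: "gog m Y \<Longrightarrow> 1 \<le> j \<Longrightarrow> j < i \<Longrightarrow> i \<le> m \<Longrightarrow> Y i j < int m"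
  using gog_bounds(2)[of m Y j i] by simp

lemma addR_gog:
  assumes g: "gog m Y" and m1: "1 \<le> m"
  shows "gog (Suc m) (addR (Suc m) Y)"
proof (rule gog_intro)
  let ?X = "addR (Suc m) Y"
  show "?X i j = 0" if "(i, j) \<notin> tri_idx (Suc m)" for i j using that by (simp add: addR_def)
  show "0 < ?X i j" if t: "1 \<le> j" "j \<le> i" "i \<le> Suc m" for i j
  proof (cases "j = i")
    case True then show ?thesis using t by (simp add: addR_def tri_idx_def)
  next
    case False
    then have "0 < Y (i - 1) j" using gog_pos[OF g, of j "i - 1"] t by simp
    then show ?thesis using t False by (simp add: addR_def tri_idx_def)
  qed
  show "?X (i + 1) j \<le> ?X i j" if t0: "1 \<le> j" "j \<le> i" "i \<le> Suc m - 1" for i j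
  proof -
    have t: "1 \<le> j" "j \<le> i" "i \<le> m" using t0 by auto
    show ?thesis
    proof (cases "j = i")
      case True
      have "Y i i \<le> int m" using gog_diag_le[OF g, of i i] t by simp
      then show ?thesis using t True by (simp add: addR_def tri_idx_def)
    next
      case False
      then have "Y (i - 1 + 1) j \<le> Y (i - 1) j" using gog_gt1[OF g, of j "i - 1"] t by simp
      then show ?thesis using t False by (simp add: addR_def tri_idx_def)
    qed
  qed
  show "?X i j \<le> ?X (i + 1) (j + 1)" if t0: "1 \<le> j" "j \<le> i" "i \<le> Suc m - 1" for i j
  proof -
    have t: "1 \<le> j" "j \<le> i" "i \<le> m" using t0 by auto
    show ?thesis
    proof (cases "j = i")
      case True
      then show ?thesis using t by (simp add: addR_def tri_idx_def)
    next
      case False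
      then have "Y (i - 1) j \<le> Y (i - 1 + 1) (j + 1)" using gog_gt2[OF g, of j "i - 1"] t by simp
      then show ?thesis using t False by (simp add: addR_def tri_idx_def)
    qed
  qed
  show "?X i j < ?X i (j + 1)" if t: "1 \<le> j" "j < i" "i \<le> Suc m" for i j
  proof (cases "j + 1 = i")
    case True
    have "Y (i - 1) j \<le> int m" using gog_diag_le[OF g, of j "i - 1"] t by simp
    then show ?thesis using True t by (simp add: addR_def tri_idx_def)
  next
    case False
    then have "Y (i - 1) j < Y (i - 1) (j + 1)" using gog_strict[OF g, of j "i - 1"] t by simp
    then show ?thesis using t False by (simp add: addR_def tri_idx_def)
  qed
  show "?X (Suc m) j = int j" if a: "1 \<le> j" "j \<le> Suc m" for j
  proof (cases "j = Suc m")
    case True then show ?thesis by (simp add: addR_def tri_idx_def)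
  next
    case False
    then have "Y m j = int j" using gog_top[OF g, of j] a by simp
    then show ?thesis using a False by (simp add: addR_def tri_idx_def)
  qed
qed

lemma addR_inv:
  assumes g: "gog m Y" and m1: "1 \<le> m"
  shows "inversions (Suc m) (addR (Suc m) Y) = (\<lambda>(i, j). (Suc i, j)) ` inversions m Y"
proof (rule set_eqI)
  fix p :: "nat \<times> nat"
  obtain i j where p: "p = (i, j)" by fastforce
  show "p \<in> inversions (Suc m) (addR (Suc m) Y) \<longleftrightarrow> p \<in> (\<lambda>(i, j). (Suc i, j)) ` inversions m Y"
  proof (cases "1 \<le> j \<and> j < i")
    case True
    then obtain i' where q: "i = Suc i'" by (metis lessE)
    show ?thesis unfolding p q using True q
      by (auto simp: inversions_def addR_def tri_idx_def image_iff)
  next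
    case False
    show ?thesis
    proof (cases "1 \<le> j \<and> j = i \<and> i \<le> m")
      case True
      have "Y i i \<le> int m" using gog_diag_le[OF g, of i i] True by simp
      then show ?thesis unfolding p using True
        by (auto simp: inversions_def addR_def tri_idx_def)
    next
      case False
      then show ?thesis unfolding p using \<open>\<not> (1 \<le> j \<and> j < i)\<close>
        by (auto simp: inversions_def)
    qed
  qed
qed

lemma addR_coinv:
  assumes g: "gog m Y" and m1: "1 \<le> m"
  shows "coinversions (Suc m) (addR (Suc m) Y) =
     {(i, i) | i. 1 \<le> i \<and> i \<le> m} \<union> (\<lambda>(i, j). (Suc i, j)) ` coinversions m Y"
proof (rule set_eqI)
  fix p :: "nat \<times> nat"
  obtain i j where p: "p = (i, j)" by fastforce
  show "p \<in> coinversions (Suc m) (addR (Suc m) Y) \<longleftrightarrow>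
      p \<in> {(i, i) | i. 1 \<le> i \<and> i \<le> m} \<union> (\<lambda>(i, j). (Suc i, j)) ` coinversions m Y"
  proof (cases "1 \<le> j \<and> j < i")
    case True
    then obtain i' where q: "i = Suc i'" by (metis lessE)
    show ?thesis unfolding p q using True q
      by (auto simp: coinversions_def addR_def tri_idx_def image_iff)
  next
    case False
    then show ?thesis unfolding p
      by (auto simp: coinversions_def addR_def tri_idx_def)
  qed
qed

lemma addR_cards:
  assumes g: "gog m Y" and "1 \<le> m"
  shows "card (inversions (Suc m) (addR (Suc m) Y)) = card (inversions m Y)"
    "card (coinversions (Suc m) (addR (Suc m) Y)) = m + card (coinversions m Y)"
proof -
  have inj: "inj (\<lambda>(i, j). (Suc i, j) :: nat \<times> nat)" by (auto simp: inj_def)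
  have c1: "card {(i, i) | i::nat. 1 \<le> i \<and> i \<le> m} = m"
  proof -
    have e: "{(i, i) | i::nat. 1 \<le> i \<and> i \<le> m} = (\<lambda>i. (i, i)) ` {1..m}" by auto
    show ?thesis unfolding e by (simp add: card_image inj_on_def)
  qed
  have d: "{(i, i) | i. 1 \<le> i \<and> i \<le> m} \<inter> (\<lambda>(i, j). (Suc i, j)) ` coinversions m Y = {}"
    by (auto simp: coinversions_def)
  show "card (inversions (Suc m) (addR (Suc m) Y)) = card (inversions m Y)"
    unfolding addR_inv[OF assms] using inj by (simp add: card_image inj_on_subset)
  show "card (coinversions (Suc m) (addR (Suc m) Y)) = m + card (coinversions m Y)"
    unfolding addR_coinv[OF assms]
    by (subst card_Un_disjoint) (use d c1 inj in \<open>auto simp: card_image inj_on_subset\<close>)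
qed



definition fam :: "nat \<Rightarrow> (nat \<Rightarrow> nat) \<Rightarrow> (nat \<Rightarrow> nat) \<Rightarrow> nat \<Rightarrow> nat \<Rightarrow> int" where
  "fam n g h i j = (if (i, j) \<in> tri_idx n then int j + int (min (n - i) (min (g (i - j)) (h j))) else 0)"

lemma fam_gog:
  assumes gm: "\<And>d. g (Suc d) \<le> g d" and hm: "\<And>j. h j \<le> h (Suc j)"
  shows "gog n (fam n g h)"
proof (rule gog_intro)
  let ?X = "fam n g h"
  show "?X i j = 0" if "(i, j) \<notin> tri_idx n" for i j using that by (simp add: fam_def)
  show "0 < ?X i j" if t: "1 \<le> j" "j \<le> i" "i \<le> n" for i j
    using t by (simp add: fam_def tri_idx_def)
  show "?X (i + 1) j \<le> ?X i j" if t: "1 \<le> j" "j \<le> i" "i \<le> n - 1" for i j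
  proof -
    have e: "i + 1 - j = Suc (i - j)" using t by simp
    have "min (n - (i + 1)) (min (g (i + 1 - j)) (h j)) \<le> min (n - i) (min (g (i - j)) (h j))"
      unfolding e using gm[of "i - j"] by (auto simp: min_def)
    moreover have "i < n" using t by simp
    ultimately show ?thesis using t by (simp add: fam_def tri_idx_def)
  qed
  show "?X i j \<le> ?X (i + 1) (j + 1)" if t: "1 \<le> j" "j \<le> i" "i \<le> n - 1" for i j
  proof -
    have e: "i + 1 - (j + 1) = i - j" by simp
    have "i < n" using t by simp
    have "min (n - i) (min (g (i - j)) (h j)) \<le> 1 + min (n - (i + 1)) (min (g (i - j)) (h (j + 1)))"
      using hm[of j] t \<open>i < n\<close> by (auto simp: min_def)
    then show ?thesis using t \<open>i < n\<close> by (simp add: fam_def tri_idx_def)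
  qed
  show "?X i j < ?X i (j + 1)" if t: "1 \<le> j" "j < i" "i \<le> n" for i j
  proof -
    have e: "i - j = Suc (i - (j + 1))" using t by simp
    define m1 where "m1 = min (n - i) (min (g (i - j)) (h j))"
    define m2 where "m2 = min (n - i) (min (g (i - (j + 1))) (h (j + 1)))"
    have "m1 \<le> m2"
      unfolding m1_def m2_def e using hm[of j] gm[of "i - (j + 1)"] by (simp add: min_def)
    moreover have "?X i j = int j + int m1" "?X i (j + 1) = int j + 1 + int m2"
      using t unfolding m1_def m2_def by (simp_all add: fam_def tri_idx_def)
    ultimately show ?thesis by simp
  qed
  show "?X n j = int j" if "1 \<le> j" "j \<le> n" for j using that by (simp add: fam_def tri_idx_def)
qed

lemma fam_inv_iff:
  assumes gm: "\<And>d. g (Suc d) \<le> g d" and t: "1 \<le> j" "j \<le> i" "i \<le> n - 1"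
  shows "fam n g h i j = fam n g h (i + 1) j \<longleftrightarrow>
    min (g (i - j)) (h j) < n - i \<and> min (g (i - j)) (h j) \<le> g (Suc (i - j))"
proof -
  have e: "i + 1 - j = Suc (i - j)" using t by simp
  have "i < n" using t by simp
  have "fam n g h i j = fam n g h (i + 1) j \<longleftrightarrow>
     min (n - i) (min (g (i - j)) (h j)) = min (n - (i + 1)) (min (g (Suc (i - j))) (h j))"
    using t e \<open>i < n\<close> by (simp add: fam_def tri_idx_def)
  also have "\<dots> \<longleftrightarrow> min (g (i - j)) (h j) < n - i \<and> min (g (i - j)) (h j) \<le> g (Suc (i - j))"
    using gm[of "i - j"] t \<open>i < n\<close> by (auto simp: min_def; arith)
  finally show ?thesis .
qed

lemma fam_coinv_iff:
  assumes hm: "\<And>j. h j \<le> h (Suc j)" and t: "1 \<le> j" "j \<le> i" "i \<le> n - 1"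
  shows "fam n g h i j = fam n g h (i + 1) (j + 1) \<longleftrightarrow> n - i \<le> g (i - j) \<and> n - i \<le> h j"
proof -
  have "i < n" using t by simp
  have "fam n g h i j = fam n g h (i + 1) (j + 1) \<longleftrightarrow>
     min (n - i) (min (g (i - j)) (h j)) = 1 + min (n - (i + 1)) (min (g (i - j)) (h (Suc j)))"
  proof -
    have v1: "fam n g h i j = int j + int (min (n - i) (min (g (i - j)) (h j)))"
      using t by (simp add: fam_def tri_idx_def)
    have v2: "fam n g h (i + 1) (j + 1) = int j + 1 + int (min (n - (i + 1)) (min (g (i - j)) (h (Suc j))))"
      using t \<open>i < n\<close> by (simp add: fam_def tri_idx_def)
    show ?thesis unfolding v1 v2 by auto
  qed
  also have "\<dots> \<longleftrightarrow> n - i \<le> g (i - j) \<and> n - i \<le> h j"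
    using hm[of j] t \<open>i < n\<close> by (auto simp: min_def; arith)
  finally show ?thesis .
qed

lemma card_stair:
  "card {(i, j). a + 1 \<le> j \<and> j + b \<le> i \<and> i \<le> a + b + m} = Tn m"
proof (induction m)
  case 0
  have e0: "{(i, j). a + 1 \<le> j \<and> j + b \<le> i \<and> i \<le> a + b + 0} = {}" by auto
  show ?case unfolding e0 by simp
next
  case (Suc m)
  have e: "{(i, j). a + 1 \<le> j \<and> j + b \<le> i \<and> i \<le> a + b + Suc m} =
     {(i, j). a + 1 \<le> j \<and> j + b \<le> i \<and> i \<le> a + b + m} \<union> (\<lambda>j. (a + b + Suc m, j)) ` {a + 1..a + Suc m}"
    by auto
  have f: "finite {(i, j). a + 1 \<le> j \<and> j + b \<le> i \<and> i \<le> a + b + m}"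
    by (rule finite_subset[of _ "{..a + b + m} \<times> {..a + b + m}"]) auto
  have d: "{(i, j). a + 1 \<le> j \<and> j + b \<le> i \<and> i \<le> a + b + m} \<inter> (\<lambda>j. (a + b + Suc m, j)) ` {a + 1..a + Suc m} = {}"
    by auto
  have c: "card ((\<lambda>j. (a + b + Suc m, j)) ` {a + 1..a + Suc m}) = Suc m"
    by (simp add: card_image inj_on_def)
  show ?case unfolding e using Suc f d c by (simp add: card_Un_disjoint Tn_Suc)
qed



lemma near_corner:
  assumes k1: "1 \<le> k" and kn: "k + 2 \<le> n" and xL: "x < n - 1 - k" and yk: "y < k"
  shows "\<exists>X. gog n X \<and> card (inversions n X) = Tn k + x \<and> card (coinversions n X) = Tn (n - 1 - k) + y"
proof -
  define L where "L = n - 1 - k"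
  have L1: "1 \<le> L" "n - 1 = L + k" using kn unfolding L_def by auto
  define g where "g = (\<lambda>d. (L - d) + (if d = 0 then y else 0))"
  define h where "h = (\<lambda>j::nat. if j \<le> 1 then L - x else L + y)"
  have gm: "\<And>d. g (Suc d) \<le> g d" unfolding g_def by auto
  have hm: "\<And>j. h j \<le> h (Suc j)" unfolding h_def by auto
  define X where "X = fam n g h"
  have gX: "gog n X" unfolding X_def using fam_gog[of g h n, OF gm hm] .
  have inv_st: "(min (g (i - j)) (h j) < n - i \<and> min (g (i - j)) (h j) \<le> g (Suc (i - j)))
      \<longleftrightarrow> (j + L \<le> i \<or> (j = 1 \<and> i \<le> x))"
    if t: "1 \<le> j" "j \<le> i" "i \<le> n - 1" for i j
  proof (cases "j = 1")
    case True
    then show ?thesis using t L1 xL yk unfolding g_def h_def L_def by (auto simp: min_def; arith)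
  next
    case False
    then show ?thesis using t L1 xL yk unfolding g_def h_def L_def by (auto simp: min_def; arith)
  qed
  have co_st: "(n - i \<le> g (i - j) \<and> n - i \<le> h j) \<longleftrightarrow> (k + 1 \<le> j \<or> (i = j \<and> k + 1 - y \<le> j))"
    if t: "1 \<le> j" "j \<le> i" "i \<le> n - 1" for i j
  proof (cases "j = 1")
    case True
    then show ?thesis using t L1 xL yk unfolding g_def h_def L_def by (auto simp: min_def; arith)
  next
    case False
    then show ?thesis using t L1 xL yk unfolding g_def h_def L_def by (auto simp: min_def; arith)
  qed
  define S1 where "S1 = {(i, j). 0 + 1 \<le> j \<and> j + L \<le> i \<and> i \<le> 0 + L + k}"
  define S2 where "S2 = (\<lambda>i. (i, 1::nat)) ` {1..x}"
  define S3 where "S3 = {(i, j). k + 1 \<le> j \<and> j + 0 \<le> i \<and> i \<le> k + 0 + L}"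
  define S4 where "S4 = (\<lambda>i. (i, i)) ` {k + 1 - y..k}"
  have inv_eq: "inversions n X = S1 \<union> S2"
  proof (rule set_eqI)
    fix p :: "nat \<times> nat"
    obtain i j where p: "p = (i, j)" by fastforce
    show "p \<in> inversions n X \<longleftrightarrow> p \<in> S1 \<union> S2"
    proof (cases "1 \<le> j \<and> j \<le> i \<and> i \<le> n - 1")
      case True
      then have "p \<in> inversions n X \<longleftrightarrow> (j + L \<le> i \<or> (j = 1 \<and> i \<le> x))"
        unfolding p inversions_def X_def using fam_inv_iff[of g j i n h, OF gm] inv_st[of j i] by auto
      then show ?thesis unfolding p S1_def S2_def using True L1 by auto
    next
      case False
      then show ?thesis unfolding p S1_def S2_def inversions_def using L1 xL by auto
    qed
  qed
  have co_eq: "coinversions n X = S3 \<union> S4"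
  proof (rule set_eqI)
    fix p :: "nat \<times> nat"
    obtain i j where p: "p = (i, j)" by fastforce
    show "p \<in> coinversions n X \<longleftrightarrow> p \<in> S3 \<union> S4"
    proof (cases "1 \<le> j \<and> j \<le> i \<and> i \<le> n - 1")
      case True
      then have "p \<in> coinversions n X \<longleftrightarrow> (k + 1 \<le> j \<or> (i = j \<and> k + 1 - y \<le> j))"
        unfolding p coinversions_def X_def using fam_coinv_iff[of h j i n g, OF hm] co_st[of j i] by auto
      then show ?thesis unfolding p S3_def S4_def using True L1 by auto
    next
      case False
      then show ?thesis unfolding p S3_def S4_def coinversions_def using L1 yk by auto
    qed
  qed
  have cS1: "card S1 = Tn k" unfolding S1_def by (rule card_stair)
  have cS3: "card S3 = Tn L" unfolding S3_def by (rule card_stair)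
  have cS2: "card S2 = x" unfolding S2_def by (simp add: card_image inj_on_def)
  have cS4: "card S4 = y" unfolding S4_def using yk by (simp add: card_image inj_on_def)
  have f1: "finite S1" unfolding S1_def
    by (rule finite_subset[of _ "{..L + k} \<times> {..L + k}"]) auto
  have f3: "finite S3" unfolding S3_def
    by (rule finite_subset[of _ "{..k + L} \<times> {..k + L}"]) auto
  have d12: "S1 \<inter> S2 = {}" unfolding S1_def S2_def using L1 xL by auto
  have d34: "S3 \<inter> S4 = {}" unfolding S3_def S4_def by auto
  have "card (inversions n X) = Tn k + x"
    unfolding inv_eq using card_Un_disjoint[OF f1 _ d12] cS1 cS2 unfolding S2_def by simp
  moreover have "card (coinversions n X) = Tn (n - 1 - k) + y"
    unfolding co_eq using card_Un_disjoint[OF f3 _ d34] cS3 cS4 unfolding S4_def L_def by simp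
  ultimately show ?thesis using gX by blast
qed



lemma Tn_eq1: "k * (k + 1) div 2 = Tn k" by (simp add: Tn_def)

lemma Tn_eq2: "k \<le> n - 1 \<Longrightarrow> 1 \<le> n \<Longrightarrow> (n - k - 1) * (n - k) div 2 = Tn (n - 1 - k)"
proof -
  assume a: "k \<le> n - 1" "1 \<le> n"
  then have "n - k = n - 1 - k + 1" by simp
  then show ?thesis unfolding Tn_def by (metis diff_right_commute)
qed

lemma Tn_eq3: "1 \<le> n \<Longrightarrow> n * (n - 1) div 2 = Tn (n - 1)"
proof -
  assume "1 \<le> n"
  then have "n = n - 1 + 1" by simp
  then have "n * (n - 1) = (n - 1) * (n - 1 + 1)" by (metis mult.commute)
  then show ?thesis unfolding Tn_def by simp
qed

lemma A_n_iff:
  assumes "1 \<le> n"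
  shows "(p, q) \<in> A_n n \<longleftrightarrow> (\<exists>k\<le>n - 1. Tn k \<le> p \<and> Tn (n - 1 - k) \<le> q \<and> p + q \<le> Tn (n - 1))"
  unfolding A_n_def A_nk_def using Tn_eq1 Tn_eq2[OF _ assms] Tn_eq3[OF assms]
  by (auto simp del: One_nat_def)

lemma total_bound:
  assumes g: "gog n X"
  shows "card (inversions n X) + card (coinversions n X) \<le> Tn (n - 1)"
proof -
  define P where "P = {(i, j). 0 + 1 \<le> j \<and> j + 0 \<le> i \<and> i \<le> 0 + 0 + (n - 1)}"
  have fP: "finite P" unfolding P_def
    by (rule finite_subset[of _ "{..n} \<times> {..n}"]) auto
  have sub: "inversions n X \<union> coinversions n X \<subseteq> P"
    unfolding P_def inversions_def coinversions_def by auto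
  have disj: "inversions n X \<inter> coinversions n X = {}"
  proof (rule ccontr)
    assume "inversions n X \<inter> coinversions n X \<noteq> {}"
    then obtain i j where ij: "(i, j) \<in> inversions n X" "(i, j) \<in> coinversions n X" by auto
    then have t: "1 \<le> j" "j \<le> i" "i \<le> n - 1" "X i j = X (i + 1) j" "X i j = X (i + 1) (j + 1)"
      unfolding inversions_def coinversions_def by auto
    have "i < n" using t by simp
    have "X (i + 1) j < X (i + 1) (j + 1)" using gog_strict[OF g, of j "i + 1"] t \<open>i < n\<close> by simp
    then show False using t by simp
  qed
  have "card (inversions n X) + card (coinversions n X) = card (inversions n X \<union> coinversions n X)"
    using disj by (simp add: card_Un_disjoint)
  also have "\<dots> \<le> card P" using card_mono[OF fP sub] .
  also have "\<dots> = Tn (n - 1)" unfolding P_def by (rule card_stair)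
  finally show ?thesis .
qed

lemma necessity:
  assumes g: "gog n X" and n1: "1 \<le> n"
  shows "(card (inversions n X), card (coinversions n X)) \<in> A_n n"
  using necessity_T[OF g] total_bound[OF g] A_n_iff[OF n1] by blast

lemma sufficiency:
  "1 \<le> n \<Longrightarrow> (p, q) \<in> A_n n \<Longrightarrow> \<exists>X. gog n X \<and> card (inversions n X) = p \<and> card (coinversions n X) = q"
proof (induction n arbitrary: p q)
  case 0 then show ?case by simp
next
  case (Suc m)
  obtain k where k: "k \<le> m" "Tn k \<le> p" "Tn (m - k) \<le> q" "p + q \<le> Tn m"
    using Suc.prems A_n_iff[of "Suc m" p q] by auto
  show ?case
  proof (cases "m = 0")
    case True
    then have pq: "p = 0" "q = 0" using k by auto
    define X where "X = fam 1 (\<lambda>_. 0) (\<lambda>_. 0)"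
    have "gog 1 X" unfolding X_def by (rule fam_gog) auto
    moreover have "inversions 1 X = {}" "coinversions 1 X = {}"
      unfolding inversions_def coinversions_def by auto
    ultimately show ?thesis using True pq by auto
  next
    case False
    then have m1: "1 \<le> m" by simp
    show ?thesis
    proof (cases "1 \<le> k \<and> Tn k + (m - k) \<le> p")
      case True
      have tk: "Tn k = Tn (k - 1) + k" using True Tn_Suc[of "k - 1"] by simp
      have tm: "Tn m = Tn (m - 1) + m" using m1 Tn_Suc[of "m - 1"] by simp
      have "(p - m, q) \<in> A_n m"
        unfolding A_n_iff[OF m1]
        apply (rule exI[of _ "k - 1"])
        using True k tk tm by auto
      then obtain Y where Y: "gog m Y" "card (inversions m Y) = p - m" "card (coinversions m Y) = q"
        using Suc.IH[OF m1] by blast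
      have "p \<ge> m" using True tk k by simp
      then show ?thesis using addL_gog[OF Y(1) m1] addL_cards[OF Y(1) m1] Y by auto
    next
      case notA: False
      show ?thesis
      proof (cases "k + 1 \<le> m \<and> Tn (m - k) + k \<le> q")
        case True
        have tk: "Tn (m - k) = Tn (m - 1 - k) + (m - k)" using True Tn_Suc[of "m - 1 - k"]
          by (metis Suc_diff_Suc Suc_eq_plus1 diff_diff_left less_eq_Suc_le plus_1_eq_Suc)
        have tm: "Tn m = Tn (m - 1) + m" using m1 Tn_Suc[of "m - 1"] by simp
        have "(p, q - m) \<in> A_n m"
          unfolding A_n_iff[OF m1]
          apply (rule exI[of _ k])
          using True k tk tm by (auto; arith)
        then obtain Y where Y: "gog m Y" "card (inversions m Y) = p" "card (coinversions m Y) = q - m"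
          using Suc.IH[OF m1] by blast
        have "q \<ge> m" using True tk k by simp
        then show ?thesis using addR_gog[OF Y(1) m1] addR_cards[OF Y(1) m1] Y by auto
      next
        case notB: False
        have k1: "1 \<le> k"
        proof (rule ccontr)
          assume "\<not> 1 \<le> k"
          then have "k = 0" by simp
          then show False using notB k m1 by simp
        qed
        have km: "k + 1 \<le> m"
        proof (rule ccontr)
          assume "\<not> k + 1 \<le> m"
          then have "k = m" using k by simp
          then show False using notA k k1 by simp
        qed
        have x: "p - Tn k < Suc m - 1 - k" using notA k1 k by simp
        have y: "q - Tn (Suc m - 1 - k) < k" using notB km k by simp
        obtain X where X: "gog (Suc m) X" "card (inversions (Suc m) X) = Tn k + (p - Tn k)"
          "card (coinversions (Suc m) X) = Tn (Suc m - 1 - k) + (q - Tn (Suc m - 1 - k))"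
          using near_corner[OF k1 _ x y] km by auto
        then show ?thesis using k by auto
      qed
    qed
  qed
qed

theorem theorem11p1:
  fixes n :: nat
  assumes "n \<ge> 1"
  shows "(\<forall>i j. (\<exists>X. gog n X \<and> card (inversions n X) = i \<and> card (coinversions n X) = j)
              \<longleftrightarrow> (i, j) \<in> A_n n)
       \<and> (\<forall>k. k \<le> n - 1 \<longrightarrow>
            (\<exists>!X. gog n X \<and> card (inversions n X) = k * (k + 1) div 2
                   \<and> card (coinversions n X) = (n - k - 1) * (n - k) div 2)
          \<and> (\<forall>X. gog n X \<and> card (inversions n X) = k * (k + 1) div 2
                   \<and> card (coinversions n X) = (n - k - 1) * (n - k) div 2
                   \<longrightarrow> X 1 1 = int (n - k)))"
proof (intro conjI allI impI)
  fix i j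
  show "(\<exists>X. gog n X \<and> card (inversions n X) = i \<and> card (coinversions n X) = j) \<longleftrightarrow> (i, j) \<in> A_n n"
    using necessity[OF _ assms] sufficiency[OF assms] by blast
next
  fix k assume kn: "k \<le> n - 1"
  note e1 = Tn_eq1[of k] and e2 = Tn_eq2[OF kn assms]
  have mem: "(Tn k, Tn (n - 1 - k)) \<in> A_n n"
  proof -
    have "k + (n - 1 - k) = n - 1" using kn by simp
    then show ?thesis unfolding A_n_iff[OF assms] using kn Tn_add[of k "n - 1 - k"]
      by (intro exI[of _ k]) simp
  qed
  show "\<exists>!X. gog n X \<and> card (inversions n X) = k * (k + 1) div 2
                   \<and> card (coinversions n X) = (n - k - 1) * (n - k) div 2"
    unfolding e1 e2
  proof (rule ex_ex1I)
    show "\<exists>X. gog n X \<and> card (inversions n X) = Tn k \<and> card (coinversions n X) = Tn (n - 1 - k)"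
      using sufficiency[OF assms mem] .
    fix X Y
    assume "gog n X \<and> card (inversions n X) = Tn k \<and> card (coinversions n X) = Tn (n - 1 - k)"
      "gog n Y \<and> card (inversions n Y) = Tn k \<and> card (coinversions n Y) = Tn (n - 1 - k)"
    then show "X = Y" using uniqueness[OF _ assms kn] by metis
  qed
next
  fix k X assume kn: "k \<le> n - 1"
  note e1 = Tn_eq1[of k] and e2 = Tn_eq2[OF kn assms]
  assume "gog n X \<and> card (inversions n X) = k * (k + 1) div 2
                   \<and> card (coinversions n X) = (n - k - 1) * (n - k) div 2"
  then have "gog n X \<and> card (inversions n X) = Tn k \<and> card (coinversions n X) = Tn (n - 1 - k)"
    unfolding e1 e2 .
  then have "X = Fk n k" using uniqueness[OF _ assms kn] by metis
  then show "X 1 1 = int (n - k)" using kn assms by (simp add: Fk_def tri_idx_def)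
qed


end
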